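(* Let $A$ be a finite set, $\rho\subseteq A^n$ a key relation, and $\boldsymbol f=(f_1,\dots,f_n)$ a vector-function of arity $m$ (each $f_i:A^m\to A$) which preserves $\rho$. Then $\boldsymbol f$ preserves $\mathrm{Key}(\rho)$.
   Context: A unary vector-function is a tuple $\Psi=(\psi_1,\dots,\psi_n)$ of maps $\psi_i:A\to A$ acting coordinatewise; it preserves $\rho$ if $\Psi(\rho)\subseteq\rho$. $\rho$ is a key relation if there is $\beta\in A^n\setminus\rho$ (a key tuple) such that every $\alpha\in A^n\setminus\rho$ is mapped to $\beta$ by some unary vector-function preserving $\rho$. $\mathrm{Key}(\rho)$ is $\rho$ together with all key tuples for $\rho$. An $m$-ary vector-function $(f_1,\dots,f_n)$ preserves a relation $\tau\subseteq A^n$ if for all $\alpha^1,\dots,\alpha^m\in\tau$ the tuple $(f_1(\alpha^1(1),\dots,\alpha^m(1)),\dots,f_n(\alpha^1(n),\dots,\alpha^m(n)))$ lies in $\tau$. *)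

theory Defs
  imports Main
begin

text \<open>The finite base set A is the universe of a finite type 'a.
  n-tuples over A are lists of length n; a relation is a set of such lists.\<close>

definition tuples :: "nat \<Rightarrow> 'a list set" where
  "tuples n = {xs. length xs = n}"

definition apply_unary :: "nat \<Rightarrow> (nat \<Rightarrow> 'a \<Rightarrow> 'a) \<Rightarrow> 'a list \<Rightarrow> 'a list" where
  "apply_unary n \<Psi> \<alpha> = map (\<lambda>i. \<Psi> i (\<alpha> ! i)) [0..<n]"

definition preserves_unary :: "nat \<Rightarrow> (nat \<Rightarrow> 'a \<Rightarrow> 'a) \<Rightarrow> 'a list set \<Rightarrow> bool" where
  "preserves_unary n \<Psi> \<rho> \<longleftrightarrow> (\<forall>\<alpha>\<in>\<rho>. apply_unary n \<Psi> \<alpha> \<in> \<rho>)"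

definition key_tuple :: "nat \<Rightarrow> 'a list set \<Rightarrow> 'a list \<Rightarrow> bool" where
  "key_tuple n \<rho> \<beta> \<longleftrightarrow> \<beta> \<in> tuples n - \<rho> \<and>
     (\<forall>\<alpha>\<in>tuples n - \<rho>. \<exists>\<Psi>. preserves_unary n \<Psi> \<rho> \<and> apply_unary n \<Psi> \<alpha> = \<beta>)"

definition key_relation :: "nat \<Rightarrow> 'a list set \<Rightarrow> bool" where
  "key_relation n \<rho> \<longleftrightarrow> \<rho> \<subseteq> tuples n \<and> (\<exists>\<beta>. key_tuple n \<rho> \<beta>)"

definition Key :: "nat \<Rightarrow> 'a list set \<Rightarrow> 'a list set" where
  "Key n \<rho> = \<rho> \<union> {\<beta>. key_tuple n \<rho> \<beta>}"

definition apply_vf :: "nat \<Rightarrow> nat \<Rightarrow> (nat \<Rightarrow> 'a list \<Rightarrow> 'a) \<Rightarrow> (nat \<Rightarrow> 'a list) \<Rightarrow> 'a list" where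
  "apply_vf n m f \<alpha>s = map (\<lambda>i. f i (map (\<lambda>j. \<alpha>s j ! i) [0..<m])) [0..<n]"

definition preserves_vf :: "nat \<Rightarrow> nat \<Rightarrow> (nat \<Rightarrow> 'a list \<Rightarrow> 'a) \<Rightarrow> 'a list set \<Rightarrow> bool" where
  "preserves_vf n m f \<tau> \<longleftrightarrow> (\<forall>\<alpha>s. (\<forall>j<m. \<alpha>s j \<in> \<tau>) \<longrightarrow> apply_vf n m f \<alpha>s \<in> \<tau>)"

end

theory Submission
  imports Defs
begin

lemma apply_unary_nth: "i < n \<Longrightarrow> apply_unary n \<Psi> x ! i = \<Psi> i (x ! i)"
  by (simp add: apply_unary_def)

lemma compose_eq:
  "apply_unary n (\<lambda>i a. f i (map (\<lambda>j. \<Phi> j i a) [0..<m])) x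
   = apply_vf n m f (\<lambda>j. apply_unary n (\<Phi> j) x)"
  by (simp add: apply_unary_def apply_vf_def)

theorem mainTheorem19:
  fixes \<rho> :: "('a::finite) list set" and f :: "nat \<Rightarrow> 'a list \<Rightarrow> 'a" and n m :: nat
  assumes "key_relation n \<rho>"
    and "preserves_vf n m f \<rho>"
  shows "preserves_vf n m f (Key n \<rho>)"
  unfolding preserves_vf_def
proof (intro allI impI)
  fix \<alpha>s assume H: "\<forall>j<m. \<alpha>s j \<in> Key n \<rho>"
  have sub: "\<rho> \<subseteq> tuples n" using assms(1) by (simp add: key_relation_def)
  let ?g = "apply_vf n m f \<alpha>s"
  show "?g \<in> Key n \<rho>"
  proof (cases "?g \<in> \<rho>")
    case True then show ?thesis by (simp add: Key_def)
  next
    case False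
    have "key_tuple n \<rho> ?g"
      unfolding key_tuple_def
    proof (intro conjI ballI)
      show "?g \<in> tuples n - \<rho>" using False by (simp add: tuples_def apply_vf_def)
    next
      fix \<alpha> assume a: "\<alpha> \<in> tuples n - \<rho>"
      have "\<forall>j. \<exists>\<Phi>. j < m \<longrightarrow> preserves_unary n \<Phi> \<rho> \<and> apply_unary n \<Phi> \<alpha> = \<alpha>s j"
      proof
        fix j
        show "\<exists>\<Phi>. j < m \<longrightarrow> preserves_unary n \<Phi> \<rho> \<and> apply_unary n \<Phi> \<alpha> = \<alpha>s j"
        proof (cases "j < m")
          case True
          then have "\<alpha>s j \<in> Key n \<rho>" using H by simp
          then show ?thesis
          proof (cases "\<alpha>s j \<in> \<rho>")
            case True
            then have len: "length (\<alpha>s j) = n" using sub by (auto simp: tuples_def)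
            have c: "apply_unary n (\<lambda>i _. \<alpha>s j ! i) y = \<alpha>s j" for y
              using len by (simp add: apply_unary_def list_eq_iff_nth_eq)
            show ?thesis
              by (rule exI[of _ "\<lambda>i _. \<alpha>s j ! i"]) (simp add: c preserves_unary_def True)
          next
            case False
            with \<open>\<alpha>s j \<in> Key n \<rho>\<close> have "key_tuple n \<rho> (\<alpha>s j)" by (simp add: Key_def)
            then show ?thesis using a unfolding key_tuple_def by blast
          qed
        qed simp
      qed
      then obtain \<Phi> where \<Phi>: "\<And>j. j < m \<Longrightarrow> preserves_unary n (\<Phi> j) \<rho> \<and> apply_unary n (\<Phi> j) \<alpha> = \<alpha>s j"
        by metis
      let ?T = "\<lambda>i a. f i (map (\<lambda>j. \<Phi> j i a) [0..<m])"
      have "preserves_unary n ?T \<rho>"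
        unfolding preserves_unary_def
      proof
        fix x assume "x \<in> \<rho>"
        then have "\<forall>j<m. apply_unary n (\<Phi> j) x \<in> \<rho>" using \<Phi> by (simp add: preserves_unary_def)
        then show "apply_unary n ?T x \<in> \<rho>"
          using assms(2) by (simp add: compose_eq preserves_vf_def)
      qed
      moreover have "apply_unary n ?T \<alpha> = ?g"
        unfolding compose_eq apply_vf_def
        by (rule map_cong[OF refl], rule arg_cong[where f="f _"], rule map_cong[OF refl]) (simp add: \<Phi>)
      ultimately show "\<exists>\<Psi>. preserves_unary n \<Psi> \<rho> \<and> apply_unary n \<Psi> \<alpha> = ?g" by blast
    qed
    then show ?thesis by (simp add: Key_def)
  qed
qed

end
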